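(* Let $A\in\mathbb{M}_m(\mathbb{M}_n)$ be positive semidefinite. Then \[ (\mathrm{tr} A)^{mn}+\big(\det(\mathrm{tr}_1 A)\big)^m\ge \det A+\big(\det(\mathrm{tr}_2 A)\big)^n, \] and \[ (\mathrm{tr} A)^{mn}+\big(\det(\mathrm{tr}_2 A)\big)^n\ge \det A+\big(\det(\mathrm{tr}_1 A)\big)^m. \]
   Context: $\mathbb{M}_m(\mathbb{M}_n)$ denotes the set of $mn\times mn$ complex matrices partitioned as $A=[A_{i,j}]_{i,j=1}^m$ with each block $A_{i,j}$ an $n\times n$ complex matrix. The partial traces are $\mathrm{tr}_1 A=\sum_{i=1}^m A_{i,i}\in\mathbb{M}_n$ and $\mathrm{tr}_2 A=[\mathrm{tr}\,A_{i,j}]_{i,j=1}^m\in\mathbb{M}_m$. *)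

theory Defs
  imports "Jordan_Normal_Form.Determinant" "Jordan_Normal_Form.Conjugate"
begin

text \<open>A matrix in M_m(M_n) is an (m*n) x (m*n) complex matrix; the block A_{i,j}
  (i,j < m) has entry (k,l) (k,l < n) at position (i*n+k, j*n+l).\<close>

definition psd_mat :: "nat \<Rightarrow> complex mat \<Rightarrow> bool" where
  "psd_mat N A \<longleftrightarrow> A \<in> carrier_mat N N
     \<and> (\<forall>i<N. \<forall>j<N. A $$ (i, j) = cnj (A $$ (j, i)))
     \<and> (\<forall>x \<in> carrier_vec N. 0 \<le> Re (\<Sum>i<N. \<Sum>j<N. cnj (x $ i) * A $$ (i, j) * x $ j))"

definition mtrace :: "complex mat \<Rightarrow> complex" where
  "mtrace A = (\<Sum>i<dim_row A. A $$ (i, i))"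

text \<open>tr_1 A = sum of diagonal blocks (an n x n matrix).\<close>
definition ptrace1 :: "nat \<Rightarrow> nat \<Rightarrow> complex mat \<Rightarrow> complex mat" where
  "ptrace1 m n A = mat n n (\<lambda>(k, l). \<Sum>i<m. A $$ (i * n + k, i * n + l))"

text \<open>tr_2 A = [tr A_{i,j}] (an m x m matrix).\<close>
definition ptrace2 :: "nat \<Rightarrow> nat \<Rightarrow> complex mat \<Rightarrow> complex mat" where
  "ptrace2 m n A = mat m m (\<lambda>(i, j). \<Sum>k<n. A $$ (i * n + k, j * n + k))"

end

theory Submission
  imports Defs "Jordan_Normal_Form.Schur_Decomposition"
begin


lemma prod_list_le_sum_pow:
  fixes rs :: "real list"
  assumes "\<forall>r\<in>set rs. 0 \<le> r"
  shows "prod_list rs \<le> sum_list rs ^ length rs"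
  using assms
proof (induct rs)
  case Nil then show ?case by simp
next
  case (Cons x xs)
  have x: "0 \<le> x" and xs: "\<forall>r\<in>set xs. 0 \<le> r" using Cons.prems by auto
  have s: "0 \<le> sum_list xs" using xs by (induct xs) auto
  have p: "0 \<le> prod_list xs" using xs by (induct xs) auto
  have "prod_list (x # xs) = x * prod_list xs" by simp
  also have "\<dots> \<le> (x + sum_list xs) * (x + sum_list xs) ^ length xs"
    by (rule mult_mono) (use x s p Cons.hyps[OF xs] power_mono[of "sum_list xs" "x + sum_list xs" "length xs"] in auto)
  finally show ?case by simp
qed

lemma sum_list_nonneg':
  fixes rs :: "real list"
  assumes "\<forall>r\<in>set rs. 0 \<le> r" shows "0 \<le> sum_list rs"
  using assms by (induct rs) auto

lemma prod_list_le_sum_pow4: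
  fixes rs :: "real list"
  assumes nn: "\<forall>r\<in>set rs. 0 \<le> r" and len: "2 \<le> length rs"
  shows "prod_list rs \<le> sum_list rs ^ length rs / 4"
proof -
  obtain a b xs where rs: "rs = a # b # xs" using len
    by (cases rs; cases "tl rs") auto
  have a: "0 \<le> a" and b: "0 \<le> b" and xs: "\<forall>r\<in>set xs. 0 \<le> r" using nn rs by auto
  have s: "0 \<le> sum_list xs" using sum_list_nonneg'[OF xs] .
  have p: "0 \<le> prod_list xs" using xs by (induct xs) auto
  have ab: "a * b \<le> (a + b)^2 / 4"
    using sum_squares_ge_zero[of "a - b" 0] by (simp add: power2_eq_square field_simps)
  have "prod_list rs = (a * b) * prod_list xs" using rs by simp
  also have "\<dots> \<le> ((a + b)^2 / 4) * (sum_list xs ^ length xs)"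
    by (rule mult_mono) (use ab p a b prod_list_le_sum_pow[OF xs] in auto)
  also have "\<dots> \<le> ((a + b + sum_list xs)^2 / 4) * ((a + b + sum_list xs) ^ length xs)"
    by (intro mult_mono divide_right_mono power_mono) (use a b s in auto)
  also have "\<dots> = sum_list rs ^ length rs / 4" using rs by (simp add: power_add[symmetric] add.assoc)
  finally show ?thesis .
qed



lemma mtrace_comm:
  assumes X: "X \<in> carrier_mat k l" and Y: "Y \<in> carrier_mat l k"
  shows "mtrace (X * Y) = mtrace (Y * X)"
proof -
  have "mtrace (X * Y) = (\<Sum>i<k. \<Sum>j<l. X $$ (i,j) * Y $$ (j,i))"
    using X Y unfolding mtrace_def
    by (auto simp: scalar_prod_def lessThan_atLeast0 intro!: sum.cong)
  also have "\<dots> = (\<Sum>j<l. \<Sum>i<k. Y $$ (j,i) * X $$ (i,j))"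
    by (subst sum.swap) (simp add: mult.commute)
  also have "\<dots> = mtrace (Y * X)"
    using X Y unfolding mtrace_def
    by (auto simp: scalar_prod_def lessThan_atLeast0 intro!: sum.cong)
  finally show ?thesis .
qed

lemma eig_real_nonneg:
  assumes psd: "psd_mat k B" and ev: "eigenvalue B e"
  shows "Im e = 0 \<and> 0 \<le> Re e"
proof -
  from psd have B: "B \<in> carrier_mat k k"
    and herm: "\<And>i j. i<k \<Longrightarrow> j<k \<Longrightarrow> B $$ (i, j) = cnj (B $$ (j, i))"
    and pos: "\<And>x. x \<in> carrier_vec k \<Longrightarrow> 0 \<le> Re (\<Sum>i<k. \<Sum>j<k. cnj (x $ i) * B $$ (i, j) * x $ j)"
    unfolding psd_mat_def by blast+
  from ev obtain v where v: "v \<in> carrier_vec k" and v0: "v \<noteq> 0\<^sub>v k" and Bv: "B *\<^sub>v v = e \<cdot>\<^sub>v v"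
    unfolding eigenvalue_def eigenvector_def using B by (auto simp del: )
  define Q where "Q = (\<Sum>i<k. \<Sum>j<k. cnj (v $ i) * B $$ (i, j) * v $ j)"
  define S where "S = (\<Sum>i<k. cnj (v $ i) * v $ i)"
  have "Q = (\<Sum>i<k. cnj (v $ i) * (B *\<^sub>v v) $ i)"
    unfolding Q_def
    apply (rule sum.cong[OF refl])
    subgoal for i using B v by (simp add: scalar_prod_def sum_distrib_left mult.assoc lessThan_atLeast0)
    done
  also have "\<dots> = e * S" unfolding S_def using v Bv
    by (auto simp: sum_distrib_left intro!: sum.cong)
  finally have QS: "Q = e * S" .
  have "cnj Q = (\<Sum>i<k. \<Sum>j<k. v $ i * cnj (B $$ (i, j)) * cnj (v $ j))"
    unfolding Q_def by (simp add: cnj_sum)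
  also have "\<dots> = (\<Sum>i<k. \<Sum>j<k. v $ i * B $$ (j, i) * cnj (v $ j))"
    apply (rule sum.cong[OF refl], rule sum.cong[OF refl])
    subgoal for i j using herm[of j i] by simp
    done
  also have "\<dots> = Q" unfolding Q_def
    by (subst sum.swap) (simp add: mult_ac)
  finally have "cnj Q = Q" .
  hence QIm: "Im Q = 0" by (metis Reals_cnj_iff complex_is_Real_iff)
  have Sr: "S = of_real (\<Sum>i<k. (cmod (v $ i))^2)" unfolding S_def of_real_sum
    apply (rule sum.cong[OF refl])
    subgoal for x using complex_norm_square[of "v $ x"] by (simp add: mult.commute)
    done
  have "\<exists>i<k. v $ i \<noteq> 0" using v0 v by (auto simp: vec_eq_iff)
  then obtain i where i: "i<k" "v $ i \<noteq> 0" by auto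
  have "0 < (\<Sum>i<k. (cmod (v $ i))^2)"
    by (rule sum_pos2[of _ i]) (use i in auto)
  moreover have "0 \<le> Re Q" unfolding Q_def by (rule pos[OF v])
  moreover have "Im Q = Im e * (\<Sum>i<k. (cmod (v $ i))^2)" "Re Q = Re e * (\<Sum>i<k. (cmod (v $ i))^2)"
    using QS Sr by simp_all
  ultimately show ?thesis using QIm
    by (auto simp: zero_le_mult_iff)
qed


lemma of_real_prod_list': "complex_of_real (prod_list rs) = prod_list (map of_real rs)"
  by (induct rs) auto
lemma of_real_sum_list': "complex_of_real (sum_list rs) = sum_list (map of_real rs)"
  by (induct rs) auto

lemma psd_spectrum:
  assumes psd: "psd_mat k B"
  shows "\<exists>rs::real list. length rs = k \<and> (\<forall>r\<in>set rs. 0 \<le> r) \<and>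
     det B = of_real (prod_list rs) \<and> mtrace B = of_real (sum_list rs)"
proof -
  from psd have B: "B \<in> carrier_mat k k" unfolding psd_mat_def by blast
  from char_poly_factorized[OF B] obtain es where cp: "char_poly B = (\<Prod>a\<leftarrow>es. [:- a, 1:])"
    and len: "length es = k" by blast
  obtain C P Q where sd: "schur_decomposition B es = (C, P, Q)" by (cases "schur_decomposition B es") auto
  from schur_decomposition[OF B cp sd] have sim: "similar_mat_wit B C P Q"
    and ut: "upper_triangular C" and dg: "diag_mat C = es" by auto
  from sim B have C: "C \<in> carrier_mat k k" and P: "P \<in> carrier_mat k k" and Q: "Q \<in> carrier_mat k k"
    and QP: "Q * P = 1\<^sub>m k" and BPCQ: "B = P * C * Q"
    unfolding similar_mat_wit_def Let_def by auto
  have detB: "det B = prod_list es"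
    using det_similar[of B C] sim det_upper_triangular[OF ut C] dg
    unfolding similar_mat_def by auto
  have "mtrace B = mtrace (Q * (P * C))"
    unfolding BPCQ by (rule mtrace_comm[of _ k k]) (use P C Q in auto)
  also have "Q * (P * C) = (Q * P) * C" using P C Q by (simp add: assoc_mult_mat)
  also have "\<dots> = C" using QP C by simp
  finally have "mtrace B = mtrace C" .
  also have "mtrace C = sum_list (diag_mat C)"
    unfolding mtrace_def diag_mat_def
    by (simp only: sum_set_upt_conv_sum_list_nat[symmetric] set_upt lessThan_atLeast0)
  finally have trB: "mtrace B = sum_list es" using dg by simp
  have ev: "Im e = 0 \<and> 0 \<le> Re e" if e: "e \<in> set es" for e
  proof -
    have "poly (char_poly B) e = 0" unfolding cp poly_prod_list
      using e by (auto simp: prod_list_zero_iff)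
    hence "eigenvalue B e" using eigenvalue_root_char_poly[OF B] by simp
    thus ?thesis by (rule eig_real_nonneg[OF psd])
  qed
  define rs where "rs = map Re es"
  have es: "es = map of_real rs" unfolding rs_def using ev
    by (induct es) (auto simp: complex_eq_iff)
  show ?thesis
  proof (intro exI[of _ rs] conjI)
    show "length rs = k" using len unfolding rs_def by simp
    show "\<forall>r\<in>set rs. 0 \<le> r" using ev unfolding rs_def by auto
    show "det B = of_real (prod_list rs)" using detB unfolding of_real_prod_list' es[symmetric] .
    show "mtrace B = of_real (sum_list rs)" using trB unfolding of_real_sum_list' es[symmetric] .
  qed
qed



lemma idx_lt: "i < m \<Longrightarrow> k < n \<Longrightarrow> i * n + k < m * (n::nat)"
proof -
  assume "i < m" "k < n"
  hence "i * n + k < i * n + n" by simp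
  also have "\<dots> = Suc i * n" by simp
  also have "\<dots> \<le> m * n" using \<open>i < m\<close> by (intro mult_right_mono) auto
  finally show ?thesis .
qed

lemma idx_div: "k < n \<Longrightarrow> (i * n + k) div n = (i::nat)" by simp
lemma idx_mod: "k < n \<Longrightarrow> (i * n + k) mod n = (k::nat)" by simp

lemma sum_split_idx:
  fixes f :: "nat \<Rightarrow> 'a::comm_monoid_add"
  shows "(\<Sum>j<m*n. f j) = (\<Sum>i<m. \<Sum>k<n. f (i * n + k))"
proof (induct m)
  case 0 then show ?case by simp
next
  case (Suc m)
  have "{..<Suc m * n} = {..<m*n} \<union> {m*n..<m*n+n}" by (auto simp: add.commute)
  hence "(\<Sum>j<Suc m*n. f j) = (\<Sum>j<m*n. f j) + (\<Sum>j\<in>{m*n..<m*n+n}. f j)"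
    by (simp add: sum.union_disjoint ivl_disj_int)
  also have "(\<Sum>j\<in>{m*n..<m*n+n}. f j) = (\<Sum>k<n. f (m * n + k))"
  proof -
    have "(\<Sum>j\<in>{m*n..<m*n+n}. f j) = (\<Sum>k\<in>{0..<n}. f (k + m * n))"
      using sum.shift_bounds_nat_ivl[of f 0 "m*n" n] by (simp add: add.commute)
    thus ?thesis by (simp add: lessThan_atLeast0 add.commute)
  qed
  finally show ?case using Suc by simp
qed


lemma mtrace_ptrace1: assumes "A \<in> carrier_mat (m*n) (m*n)"
  shows "mtrace (ptrace1 m n A) = mtrace A"
proof -
  have "mtrace (ptrace1 m n A) = (\<Sum>k<n. \<Sum>i<m. A $$ (i * n + k, i * n + k))"
    unfolding mtrace_def ptrace1_def by simp
  also have "\<dots> = (\<Sum>i<m. \<Sum>k<n. A $$ (i * n + k, i * n + k))" by (rule sum.swap)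
  also have "\<dots> = mtrace A" unfolding mtrace_def using assms
    using sum_split_idx[of "\<lambda>j. A $$ (j, j)" m n] by simp
  finally show ?thesis .
qed

lemma mtrace_ptrace2: assumes "A \<in> carrier_mat (m*n) (m*n)"
  shows "mtrace (ptrace2 m n A) = mtrace A"
proof -
  have "mtrace (ptrace2 m n A) = (\<Sum>i<m. \<Sum>k<n. A $$ (i * n + k, i * n + k))"
    unfolding mtrace_def ptrace2_def by simp
  also have "\<dots> = mtrace A" unfolding mtrace_def using assms
    using sum_split_idx[of "\<lambda>j. A $$ (j, j)" m n] by simp
  finally show ?thesis .
qed

lemma det_1x1: "det (mat 1 1 f) = f (0, 0)"
proof -
  have "det (mat 1 1 f) = prod_list (diag_mat (mat 1 1 f))"
    by (rule det_upper_triangular) (auto simp: upper_triangular_def)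
  also have "\<dots> = f (0,0)" by (simp add: diag_mat_def)
  finally show ?thesis .
qed

lemma ptrace1_m1: assumes "A \<in> carrier_mat n n" shows "ptrace1 1 n A = A"
  using assms by (auto simp: ptrace1_def intro: eq_matI)

lemma ptrace2_n1: assumes "A \<in> carrier_mat m m" shows "ptrace2 m 1 A = A"
  using assms by (auto simp: ptrace2_def intro: eq_matI)

lemma det_ptrace2_m1: assumes "A \<in> carrier_mat n n" shows "det (ptrace2 1 n A) = mtrace A"
  using assms unfolding ptrace2_def mtrace_def det_1x1 by simp

lemma det_ptrace1_n1: assumes "A \<in> carrier_mat m m" shows "det (ptrace1 m 1 A) = mtrace A"
  using assms unfolding ptrace1_def mtrace_def det_1x1 by simp


lemma qf_block1:
  fixes A :: "complex mat" and x :: "complex vec" and m n i :: nat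
  assumes i: "i < m"
  defines "y \<equiv> vec (m*n) (\<lambda>j. if j div n = i then x $ (j mod n) else 0)"
  shows "(\<Sum>j<m*n. \<Sum>j'<m*n. cnj (y $ j) * A $$ (j, j') * y $ j')
       = (\<Sum>k<n. \<Sum>l<n. cnj (x $ k) * A $$ (i*n+k, i*n+l) * x $ l)"
proof -
  have yv: "y $ (i1*n+k) = (if i1 = i then x $ k else 0)" if "i1 < m" "k < n" for i1 k
    using that idx_lt[OF that] unfolding y_def by simp
  have "(\<Sum>j<m*n. \<Sum>j'<m*n. cnj (y $ j) * A $$ (j, j') * y $ j')
     = (\<Sum>i1<m. \<Sum>k<n. \<Sum>i2<m. \<Sum>l<n. cnj (y $ (i1*n+k)) * A $$ (i1*n+k, i2*n+l) * y $ (i2*n+l))"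
    by (simp add: sum_split_idx)
  also have "\<dots> = (\<Sum>i1<m. \<Sum>k<n. \<Sum>i2<m. \<Sum>l<n. cnj (if i1 = i then x $ k else 0) * A $$ (i1*n+k, i2*n+l) * (if i2 = i then x $ l else 0))"
    by (intro sum.cong refl) (simp add: yv)
  also have "\<dots> = (\<Sum>i1<m. if i1 = i then (\<Sum>k<n. \<Sum>i2<m. \<Sum>l<n. cnj (x $ k) * A $$ (i1*n+k, i2*n+l) * (if i2 = i then x $ l else 0)) else 0)"
    by (intro sum.cong refl) simp
  also have "\<dots> = (\<Sum>k<n. \<Sum>i2<m. \<Sum>l<n. cnj (x $ k) * A $$ (i*n+k, i2*n+l) * (if i2 = i then x $ l else 0))"
    using i by (simp add: sum.delta)
  also have "\<dots> = (\<Sum>k<n. \<Sum>i2<m. if i2 = i then (\<Sum>l<n. cnj (x $ k) * A $$ (i*n+k, i2*n+l) * x $ l) else 0)"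
    by (intro sum.cong refl) simp
  also have "\<dots> = (\<Sum>k<n. \<Sum>l<n. cnj (x $ k) * A $$ (i*n+k, i*n+l) * x $ l)"
    using i by (simp add: sum.delta)
  finally show ?thesis .
qed


lemma qf_block2:
  fixes A :: "complex mat" and x :: "complex vec" and m n k :: nat
  assumes k: "k < n"
  defines "z \<equiv> vec (m*n) (\<lambda>j. if j mod n = k then x $ (j div n) else 0)"
  shows "(\<Sum>j<m*n. \<Sum>j'<m*n. cnj (z $ j) * A $$ (j, j') * z $ j')
       = (\<Sum>i<m. \<Sum>j<m. cnj (x $ i) * A $$ (i*n+k, j*n+k) * x $ j)"
proof -
  have zv: "z $ (i1*n+k1) = (if k1 = k then x $ i1 else 0)" if "i1 < m" "k1 < n" for i1 k1
    using that idx_lt[OF that] unfolding z_def by simp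
  have "(\<Sum>j<m*n. \<Sum>j'<m*n. cnj (z $ j) * A $$ (j, j') * z $ j')
     = (\<Sum>i1<m. \<Sum>k1<n. \<Sum>i2<m. \<Sum>k2<n. cnj (z $ (i1*n+k1)) * A $$ (i1*n+k1, i2*n+k2) * z $ (i2*n+k2))"
    by (simp add: sum_split_idx)
  also have "\<dots> = (\<Sum>i1<m. \<Sum>k1<n. \<Sum>i2<m. \<Sum>k2<n. cnj (if k1 = k then x $ i1 else 0) * A $$ (i1*n+k1, i2*n+k2) * (if k2 = k then x $ i2 else 0))"
    by (intro sum.cong refl) (simp add: zv)
  also have "\<dots> = (\<Sum>i1<m. \<Sum>k1<n. if k1 = k then (\<Sum>i2<m. \<Sum>k2<n. cnj (x $ i1) * A $$ (i1*n+k1, i2*n+k2) * (if k2 = k then x $ i2 else 0)) else 0)"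
    by (intro sum.cong refl) simp
  also have "\<dots> = (\<Sum>i1<m. \<Sum>i2<m. \<Sum>k2<n. cnj (x $ i1) * A $$ (i1*n+k, i2*n+k2) * (if k2 = k then x $ i2 else 0))"
    using k by (simp add: sum.delta)
  also have "\<dots> = (\<Sum>i1<m. \<Sum>i2<m. \<Sum>k2<n. if k2 = k then cnj (x $ i1) * A $$ (i1*n+k, i2*n+k2) * x $ i2 else 0)"
    by (intro sum.cong refl) simp
  also have "\<dots> = (\<Sum>i<m. \<Sum>j<m. cnj (x $ i) * A $$ (i*n+k, j*n+k) * x $ j)"
    using k by (simp add: sum.delta)
  finally show ?thesis .
qed

lemma psd_ptrace1: assumes psd: "psd_mat (m*n) A" shows "psd_mat n (ptrace1 m n A)"
proof -
  from psd have A: "A \<in> carrier_mat (m*n) (m*n)"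
    and herm: "\<And>i j. i<m*n \<Longrightarrow> j<m*n \<Longrightarrow> A $$ (i, j) = cnj (A $$ (j, i))"
    and pos: "\<And>x. x \<in> carrier_vec (m*n) \<Longrightarrow> 0 \<le> Re (\<Sum>i<m*n. \<Sum>j<m*n. cnj (x $ i) * A $$ (i, j) * x $ j)"
    unfolding psd_mat_def by blast+
  have h: "ptrace1 m n A $$ (k, l) = cnj (ptrace1 m n A $$ (l, k))" if "k < n" "l < n" for k l
    using that unfolding ptrace1_def
    apply (simp add: cnj_sum)
    apply (rule sum.cong[OF refl])
    subgoal for i using herm[of "i*n+k" "i*n+l"] idx_lt[of i m k n] idx_lt[of i m l n] that by simp
    done
  have p: "0 \<le> Re (\<Sum>k<n. \<Sum>l<n. cnj (x $ k) * ptrace1 m n A $$ (k, l) * x $ l)"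
    if x: "x \<in> carrier_vec n" for x
  proof -
    have "(\<Sum>k<n. \<Sum>l<n. cnj (x $ k) * ptrace1 m n A $$ (k, l) * x $ l)
       = (\<Sum>k<n. \<Sum>l<n. \<Sum>i<m. cnj (x $ k) * A $$ (i*n+k, i*n+l) * x $ l)"
      unfolding ptrace1_def by (intro sum.cong refl) (simp add: sum_distrib_left sum_distrib_right)
    also have "\<dots> = (\<Sum>i<m. \<Sum>k<n. \<Sum>l<n. cnj (x $ k) * A $$ (i*n+k, i*n+l) * x $ l)"
      by (simp add: sum.swap[of _ "{..<m}"])
    finally have eq: "(\<Sum>k<n. \<Sum>l<n. cnj (x $ k) * ptrace1 m n A $$ (k, l) * x $ l)
       = (\<Sum>i<m. \<Sum>k<n. \<Sum>l<n. cnj (x $ k) * A $$ (i*n+k, i*n+l) * x $ l)" .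
    show ?thesis unfolding eq Re_sum[of _ "{..<m}"]
    proof (rule sum_nonneg)
      fix i assume "i \<in> {..<m}"
      hence i: "i < m" by simp
      show "0 \<le> Re (\<Sum>k<n. \<Sum>l<n. cnj (x $ k) * A $$ (i*n+k, i*n+l) * x $ l)"
        using pos[of "vec (m*n) (\<lambda>j. if j div n = i then x $ (j mod n) else 0)"]
        unfolding qf_block1[OF i] by simp
    qed
  qed
  show ?thesis unfolding psd_mat_def using h p by (simp add: ptrace1_def)
qed

lemma psd_ptrace2: assumes psd: "psd_mat (m*n) A" shows "psd_mat m (ptrace2 m n A)"
proof -
  from psd have A: "A \<in> carrier_mat (m*n) (m*n)"
    and herm: "\<And>i j. i<m*n \<Longrightarrow> j<m*n \<Longrightarrow> A $$ (i, j) = cnj (A $$ (j, i))"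
    and pos: "\<And>x. x \<in> carrier_vec (m*n) \<Longrightarrow> 0 \<le> Re (\<Sum>i<m*n. \<Sum>j<m*n. cnj (x $ i) * A $$ (i, j) * x $ j)"
    unfolding psd_mat_def by blast+
  have h: "ptrace2 m n A $$ (i, j) = cnj (ptrace2 m n A $$ (j, i))" if "i < m" "j < m" for i j
    using that unfolding ptrace2_def
    apply (simp add: cnj_sum)
    apply (rule sum.cong[OF refl])
    subgoal for k using herm[of "i*n+k" "j*n+k"] idx_lt[of i m k n] idx_lt[of j m k n] that by simp
    done
  have p: "0 \<le> Re (\<Sum>i<m. \<Sum>j<m. cnj (x $ i) * ptrace2 m n A $$ (i, j) * x $ j)"
    if x: "x \<in> carrier_vec m" for x
  proof -
    have "(\<Sum>i<m. \<Sum>j<m. cnj (x $ i) * ptrace2 m n A $$ (i, j) * x $ j)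
       = (\<Sum>i<m. \<Sum>j<m. \<Sum>k<n. cnj (x $ i) * A $$ (i*n+k, j*n+k) * x $ j)"
      unfolding ptrace2_def by (intro sum.cong refl) (simp add: sum_distrib_left sum_distrib_right)
    also have "\<dots> = (\<Sum>k<n. \<Sum>i<m. \<Sum>j<m. cnj (x $ i) * A $$ (i*n+k, j*n+k) * x $ j)"
      by (simp add: sum.swap[of _ "{..<n}"])
    finally have eq: "(\<Sum>i<m. \<Sum>j<m. cnj (x $ i) * ptrace2 m n A $$ (i, j) * x $ j)
       = (\<Sum>k<n. \<Sum>i<m. \<Sum>j<m. cnj (x $ i) * A $$ (i*n+k, j*n+k) * x $ j)" .
    show ?thesis unfolding eq Re_sum[of _ "{..<n}"]
    proof (rule sum_nonneg)
      fix k assume "k \<in> {..<n}"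
      hence k: "k < n" by simp
      show "0 \<le> Re (\<Sum>i<m. \<Sum>j<m. cnj (x $ i) * A $$ (i*n+k, j*n+k) * x $ j)"
        using pos[of "vec (m*n) (\<lambda>j. if j mod n = k then x $ (j div n) else 0)"]
        unfolding qf_block2[OF k] by simp
    qed
  qed
  show ?thesis unfolding psd_mat_def using h p by (simp add: ptrace2_def)
qed


lemma prod_list_nonneg':
  fixes rs :: "real list"
  assumes "\<forall>r\<in>set rs. 0 \<le> r" shows "0 \<le> prod_list rs"
  using assms by (induct rs) auto

lemma key_real:
  fixes t q d :: real and m n :: nat
  assumes t: "0 \<le> t" and q: "0 \<le> q" and d: "d \<le> t^(m*n)/4" and qb: "q \<le> t^m/4" and n: "1 \<le> n"
  shows "d + q^n \<le> t^(m*n)"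
proof -
  have "q^n \<le> (t^m/4)^n" by (rule power_mono[OF qb q])
  also have "\<dots> = t^(m*n) / 4^n" by (simp add: power_divide power_mult)
  also have "\<dots> \<le> t^(m*n) / 4"
  proof (rule divide_left_mono)
    show "0 \<le> t^(m*n)" using t by simp
    have "(4::real)^1 \<le> 4^n" by (rule power_increasing[OF n]) auto
    thus "4 \<le> (4::real)^n" by simp
  qed auto
  finally have "q^n \<le> t^(m*n)/4" .
  then show ?thesis using d zero_le_power[OF t, of "m*n"] by linarith
qed

theorem proposition4p6:
  fixes m n :: nat and A :: "complex mat"
  assumes "psd_mat (m * n) A"
  shows "det A + (det (ptrace2 m n A)) ^ n \<le> (mtrace A) ^ (m * n) + (det (ptrace1 m n A)) ^ m
     \<and> det A + (det (ptrace1 m n A)) ^ m \<le> (mtrace A) ^ (m * n) + (det (ptrace2 m n A)) ^ n"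
proof -
  have A: "A \<in> carrier_mat (m*n) (m*n)" using assms unfolding psd_mat_def by blast
  obtain rsA where lA: "length rsA = m*n" and nA: "\<forall>r\<in>set rsA. 0 \<le> r"
    and dA: "det A = of_real (prod_list rsA)" and tA: "mtrace A = of_real (sum_list rsA)"
    using psd_spectrum[OF assms] by blast
  obtain rs1 where l1: "length rs1 = n" and n1: "\<forall>r\<in>set rs1. 0 \<le> r"
    and d1: "det (ptrace1 m n A) = of_real (prod_list rs1)" and t1: "mtrace (ptrace1 m n A) = of_real (sum_list rs1)"
    using psd_spectrum[OF psd_ptrace1[OF assms]] by blast
  obtain rs2 where l2: "length rs2 = m" and n2: "\<forall>r\<in>set rs2. 0 \<le> r"
    and d2: "det (ptrace2 m n A) = of_real (prod_list rs2)" and t2: "mtrace (ptrace2 m n A) = of_real (sum_list rs2)"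
    using psd_spectrum[OF psd_ptrace2[OF assms]] by blast
  define t where "t = sum_list rsA"
  define d where "d = prod_list rsA"
  define p where "p = prod_list rs1"
  define q where "q = prod_list rs2"
  have s1: "sum_list rs1 = t" using t1 mtrace_ptrace1[OF A] tA unfolding t_def by simp
  have s2: "sum_list rs2 = t" using t2 mtrace_ptrace2[OF A] tA unfolding t_def by simp
  have t0: "0 \<le> t" unfolding t_def by (rule sum_list_nonneg'[OF nA])
  have p0: "0 \<le> p" unfolding p_def by (rule prod_list_nonneg'[OF n1])
  have q0: "0 \<le> q" unfolding q_def by (rule prod_list_nonneg'[OF n2])
  have bd: "d \<le> t^(m*n)/4" if "2 \<le> m*n"
    using prod_list_le_sum_pow4[OF nA] that lA unfolding d_def t_def by simp
  have bp: "p \<le> t^n/4" if "2 \<le> n"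
    using prod_list_le_sum_pow4[OF n1] that l1 s1 unfolding p_def by simp
  have bq: "q \<le> t^m/4" if "2 \<le> m"
    using prod_list_le_sum_pow4[OF n2] that l2 s2 unfolding q_def by simp
  have R1: "d + q^n \<le> t^(m*n) + p^m"
  proof (cases "m = 0 \<or> n = 0")
    case True
    then show ?thesis using lA l1 l2 unfolding d_def p_def q_def by auto
  next
    case False
    show ?thesis
    proof (cases "m = 1")
      case True
      have "of_real p = det A" using d1 ptrace1_m1[of A n] A True unfolding p_def by simp
      hence pd: "p = d" using dA unfolding d_def by simp
      have "of_real q = mtrace A" using d2 det_ptrace2_m1[of A n] A True unfolding q_def by simp
      hence qt: "q = t" using tA unfolding t_def by simp
      show ?thesis using pd qt True by simp
    next
      case m1: False
      with False have m2: "2 \<le> m" and n1: "1 \<le> n" by auto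
      have "2 \<le> m * n" using m2 n1 by (metis mult_le_mono nat_mult_1_right)
      hence "d + q^n \<le> t^(m*n)" by (intro key_real[OF t0 q0 bd bq[OF m2] n1])
      thus ?thesis using p0 by (smt (verit) zero_le_power)
    qed
  qed
  have R2: "d + p^m \<le> t^(m*n) + q^n"
  proof (cases "m = 0 \<or> n = 0")
    case True
    then show ?thesis using lA l1 l2 unfolding d_def p_def q_def by auto
  next
    case False
    show ?thesis
    proof (cases "n = 1")
      case True
      have "of_real q = det A" using d2 ptrace2_n1[of A m] A True unfolding q_def by simp
      hence qd: "q = d" using dA unfolding d_def by simp
      have "of_real p = mtrace A" using d1 det_ptrace1_n1[of A m] A True unfolding p_def by simp
      hence pt: "p = t" using tA unfolding t_def by simp
      show ?thesis using qd pt True by simp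
    next
      case n1: False
      with False have n2: "2 \<le> n" and m1: "1 \<le> m" by auto
      have "2 \<le> n * m" using n2 m1 by (metis mult_le_mono nat_mult_1_right)
      hence "d + p^m \<le> t^(n*m)" by (intro key_real[OF t0 p0 _ bp[OF n2] m1]) (use bd in \<open>simp add: mult.commute\<close>)
      thus ?thesis using q0 by (smt (verit) mult.commute zero_le_power)
    qed
  qed
  have c1: "det A + (det (ptrace2 m n A)) ^ n = of_real (d + q^n)"
    using dA d2 unfolding d_def q_def by simp
  have c2: "(mtrace A) ^ (m * n) + (det (ptrace1 m n A)) ^ m = of_real (t^(m*n) + p^m)"
    using tA d1 unfolding t_def p_def by simp
  have c3: "det A + (det (ptrace1 m n A)) ^ m = of_real (d + p^m)"
    using dA d1 unfolding d_def p_def by simp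
  have c4: "(mtrace A) ^ (m * n) + (det (ptrace2 m n A)) ^ n = of_real (t^(m*n) + q^n)"
    using tA d2 unfolding t_def q_def by simp
  show ?thesis unfolding c1 c2 c3 c4 using R1 R2 by (simp add: less_eq_complex_def)
qed

end
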